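(* Let $d,m,e$ be parameters with $m$ a prime power and $d,e\le m$, let $n=dm$, $p=n^{-0.1}$ and $t=n/p=n^{1.1}$ (assumed an integer). Let $P$ be the random polynomial obtained from $\mathsf{NW\circ Lin}_{d,m,e}$ by independently setting each variable $x_{i,j,h}$ ($i\in[d], j\in[m], h\in[t]$) to zero with probability $1-p$. Then with probability at least $1-o(1)$ (as $n\to\infty$), $\mathsf{NW}_{d,m,e}$ is a projection of $P$, i.e. it is obtained from $P$ by setting some further variables to zero and renaming the remaining variables.
   Context: Identify $[m]$ with $\mathbb{F}_m$. $\mathsf{NW}_{d,m,e}(\{x_{i,j}\})=\sum_{q\in\mathbb{F}_m[u],\ \deg q<e} x_{1,q(1)}\cdots x_{d,q(d)}$. The polynomial $\mathsf{NW\circ Lin}_{d,m,e}$ in variables $\{x_{i,j,h}: i\in[d], j\in[m], h\in[t]\}$ is obtained from $\mathsf{NW}_{d,m,e}$ by substituting $x_{i,j}\mapsto \sum_{h=1}^{t} x_{i,j,h}$ for every $i\in[d], j\in[m]$. *)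

theory Defs
  imports "HOL-Probability.Probability" "HOL-Algebra.Ring"
begin

text \<open>Evaluation at u of the polynomial q(X) = sum_{k<e} c_k X^k over the ring R,
  given by its coefficient vector c (entries c 0, ..., c (e-1)).  The polynomials of
  degree < e over F_m correspond bijectively to such vectors c in F_m^e.\<close>
definition coeff_poly_eval :: "('a, 'b) ring_scheme \<Rightarrow> nat \<Rightarrow> (nat \<Rightarrow> 'a) \<Rightarrow> 'a \<Rightarrow> 'a" where
  "coeff_poly_eval R e c u = finsum R (\<lambda>k. c k \<otimes>\<^bsub>R\<^esub> (u [^]\<^bsub>R\<^esub> k)) {..<e}"

text \<open>NW_{d,m,e} as a polynomial with integer coefficients, represented by its evaluation
  map on assignments x :: nat \<times> nat \<Rightarrow> int (variable x_{i,j} is x (i,j), i in [d], j in [m]).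
  [m] = {1..m} is identified with the field F_m = carrier R via the bijection phi.\<close>
definition NW :: "('a, 'b) ring_scheme \<Rightarrow> (nat \<Rightarrow> 'a) \<Rightarrow> nat \<Rightarrow> nat \<Rightarrow> nat \<Rightarrow> (nat \<times> nat \<Rightarrow> int) \<Rightarrow> int" where
  "NW R phi d m e x =
     (\<Sum>c \<in> {..<e} \<rightarrow>\<^sub>E carrier R.
        \<Prod>i\<in>{1..d}. x (i, inv_into {1..m} phi (coeff_poly_eval R e c (phi i))))"

definition NWLin :: "('a, 'b) ring_scheme \<Rightarrow> (nat \<Rightarrow> 'a) \<Rightarrow> nat \<Rightarrow> nat \<Rightarrow> nat \<Rightarrow> nat
    \<Rightarrow> (nat \<times> nat \<times> nat \<Rightarrow> int) \<Rightarrow> int" where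
  "NWLin R phi d m e t y = NW R phi d m e (\<lambda>(i, j). \<Sum>h\<in>{1..t}. y (i, j, h))"

definition NWLin_restr :: "('a, 'b) ring_scheme \<Rightarrow> (nat \<Rightarrow> 'a) \<Rightarrow> nat \<Rightarrow> nat \<Rightarrow> nat \<Rightarrow> nat
    \<Rightarrow> (nat \<times> nat \<times> nat \<Rightarrow> bool) \<Rightarrow> (nat \<times> nat \<times> nat \<Rightarrow> int) \<Rightarrow> int" where
  "NWLin_restr R phi d m e t K y = NWLin R phi d m e t (\<lambda>v. if K v then y v else 0)"

text \<open>Since the coefficient ring int is an infinite
  integral domain, equality as functions on int-assignments is equality of polynomials.\<close>
definition is_projection :: "(('w \<Rightarrow> int) \<Rightarrow> int) \<Rightarrow> 'w set \<Rightarrow> (('v \<Rightarrow> int) \<Rightarrow> int) \<Rightarrow> bool" where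
  "is_projection f W g \<longleftrightarrow>
     (\<exists>\<sigma> :: 'v \<Rightarrow> 'w option. range \<sigma> \<subseteq> insert None (Some ` W) \<and>
        (\<forall>a. f a = g (\<lambda>v. case \<sigma> v of None \<Rightarrow> 0 | Some w \<Rightarrow> a w)))"

end

theory Submission
  imports Defs
begin

lemma coeff_poly_eval_closed:
  assumes "ring R" "c \<in> {..<e} \<rightarrow>\<^sub>E carrier R" "u \<in> carrier R"
  shows "coeff_poly_eval R e c u \<in> carrier R"
proof -
  interpret ring R by fact
  show ?thesis unfolding coeff_poly_eval_def
    using assms(2,3) by (intro finsum_closed) (auto intro!: m_closed nat_pow_closed)
qed

lemma NW_cong:
  assumes "field R" "bij_betw phi {1..m} (carrier R)" "d \<le> m"
    and "\<And>i j. i \<in> {1..d} \<Longrightarrow> j \<in> {1..m} \<Longrightarrow> x (i, j) = x' (i, j)"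
  shows "NW R phi d m e x = NW R phi d m e x'"
  unfolding NW_def
proof (intro sum.cong prod.cong refl)
  fix c i assume c: "c \<in> {..<e} \<rightarrow>\<^sub>E carrier R" and i: "i \<in> {1..d}"
  have r: "ring R" using assms(1) field.is_ring by blast
  have im: "phi ` {1..m} = carrier R" using assms(2) by (simp add: bij_betw_def)
  have "phi i \<in> carrier R" using i assms(3) im by auto
  then have "coeff_poly_eval R e c (phi i) \<in> phi ` {1..m}"
    using coeff_poly_eval_closed[OF r c] im by auto
  then have "inv_into {1..m} phi (coeff_poly_eval R e c (phi i)) \<in> {1..m}"
    by (rule inv_into_into)
  then show "x (i, inv_into {1..m} phi (coeff_poly_eval R e c (phi i))) =
        x' (i, inv_into {1..m} phi (coeff_poly_eval R e c (phi i)))"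
    using assms(4) i by blast
qed

lemma good_projection:
  assumes "field R" "bij_betw phi {1..m} (carrier R)" "d \<le> m"
    and cov: "\<forall>i\<in>{1..d}. \<forall>j\<in>{1..m}. \<exists>h\<in>{1..t}. K (i, j, h)"
  shows "is_projection (NW R phi d m e) ({1..d} \<times> {1..m}) (NWLin_restr R phi d m e t K)"
proof -
  define hs where "hs = (\<lambda>(i::nat, j::nat). SOME h. h \<in> {1..t} \<and> K (i, j, h))"
  have hs: "hs (i, j) \<in> {1..t} \<and> K (i, j, hs (i, j))" if "i \<in> {1..d}" "j \<in> {1..m}" for i j
    unfolding hs_def using cov that by (simp only: prod.case) (rule someI_ex, blast)
  define \<sigma> where "\<sigma> = (\<lambda>(i, j, h). if i \<in> {1..d} \<and> j \<in> {1..m} \<and> h = hs (i, j)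
      then Some (i, j) else None)"
  have "range \<sigma> \<subseteq> insert None (Some ` ({1..d} \<times> {1..m}))"
    unfolding \<sigma>_def by auto
  moreover have "NW R phi d m e a = NWLin_restr R phi d m e t K
      (\<lambda>v. case \<sigma> v of None \<Rightarrow> 0 | Some w \<Rightarrow> a w)" for a
    unfolding NWLin_restr_def NWLin_def
  proof (rule NW_cong[OF assms(1-3)])
    fix i j assume i: "i \<in> {1..d}" and j: "j \<in> {1..m}"
    have "(\<Sum>h\<in>{1..t}. (\<lambda>v. if K v then case \<sigma> v of None \<Rightarrow> 0 | Some w \<Rightarrow> a w else 0) (i, j, h))
        = (\<Sum>h\<in>{1..t}. if h = hs (i, j) then a (i, j) else 0)"
      using hs[OF i j] i j by (intro sum.cong) (auto simp: \<sigma>_def)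
    also have "\<dots> = a (i, j)" using hs[OF i j] by simp
    finally show "a (i, j) = (\<lambda>(i, j). \<Sum>h\<in>{1..t}. (\<lambda>v. if K v then case \<sigma> v of None \<Rightarrow> 0
        | Some w \<Rightarrow> a w else 0) (i, j, h)) (i, j)" by simp
  qed
  ultimately show ?thesis unfolding is_projection_def by blast
qed

lemma real_tail:
  fixes n eps :: real
  assumes "eps > 0" "n \<ge> 4 / eps" "n > 0"
  shows "n * exp (- n) \<le> eps"
proof -
  have "1 + n/2 \<le> exp (n/2)" by (rule exp_ge_add_one_self)
  then have "(1 + n/2)^2 \<le> exp (n/2) ^ 2" using assms(3) by (intro power_mono) auto
  also have "exp (n/2) ^ 2 = exp n" by (simp add: power2_eq_square flip: exp_add)
  finally have e0: "(1 + n/2)^2 \<le> exp n" .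
  have "n^2/4 \<le> (1 + n/2)^2" using assms(3) by (simp add: power2_eq_square algebra_simps)
  with e0 have e: "n^2/4 \<le> exp n" by linarith
  have "n * exp (- n) = n / exp n" by (simp add: exp_minus divide_inverse)
  also have "\<dots> \<le> n / (n^2/4)" using e assms(3) by (intro divide_left_mono) auto
  also have "\<dots> = 4 / n" using assms(3) by (simp add: power2_eq_square)
  also have "\<dots> \<le> eps" using assms by (simp add: divide_le_eq mult.commute pos_divide_le_eq)
  finally show ?thesis .
qed

lemma prob_E:
  fixes p :: real and d m t i j :: nat
  assumes "0 \<le> p" "p \<le> 1" "i \<in> {1..d}" "j \<in> {1..m}"
  defines "A \<equiv> ({1..d} \<times> {1..m} \<times> {1..t}) :: (nat \<times> nat \<times> nat) set"
  shows "measure_pmf.prob (Pi_pmf A False (\<lambda>_. bernoulli_pmf p))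
     (Pi A (\<lambda>x. if fst x = i \<and> fst (snd x) = j then {False} else UNIV)) = (1 - p) ^ t"
proof -
  have fA: "finite A" unfolding A_def by simp
  have "measure_pmf.prob (Pi_pmf A False (\<lambda>_. bernoulli_pmf p))
     (Pi A (\<lambda>x. if fst x = i \<and> fst (snd x) = j then {False} else UNIV))
     = (\<Prod>x\<in>A. measure_pmf.prob (bernoulli_pmf p) (if fst x = i \<and> fst (snd x) = j then {False} else UNIV))"
    by (rule measure_Pi_pmf_Pi[OF fA])
  also have "\<dots> = (\<Prod>x\<in>A. if fst x = i \<and> fst (snd x) = j then 1 - p else 1)"
    using assms(1,2) by (intro prod.cong refl) (auto simp: measure_pmf_single)
  also have "\<dots> = (\<Prod>x\<in>A \<inter> {x. fst x = i \<and> fst (snd x) = j}. 1 - p)"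
    using fA by (simp add: prod.If_cases)
  also have "A \<inter> {x. fst x = i \<and> fst (snd x) = j} = {i} \<times> {j} \<times> {1..t}"
    using assms(3,4) unfolding A_def by auto
  finally show ?thesis by simp
qed


theorem lemma7p2:
  shows "\<forall>\<epsilon>>0. \<exists>N. \<forall>(R :: ('a, 'b) ring_scheme) (phi :: nat \<Rightarrow> 'a) (d::nat) (m::nat) (e::nat) (t::nat).
      field R \<and> finite (carrier R) \<and> card (carrier R) = m \<and>
      bij_betw phi {1..m} (carrier R) \<and> d \<le> m \<and> e \<le> m \<and>
      N \<le> d * m \<and> real t = real (d * m) powr (11/10)
      \<longrightarrow> measure_pmf.prob
            (Pi_pmf ({1..d} \<times> {1..m} \<times> {1..t}) False
               (\<lambda>_. bernoulli_pmf (real (d * m) powr (- 1/10))))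
            {K. is_projection (NW R phi d m e) ({1..d} \<times> {1..m}) (NWLin_restr R phi d m e t K)}
          \<ge> 1 - \<epsilon>"
proof (intro allI impI)
  fix eps :: real assume eps: "eps > 0"
  show "\<exists>N. \<forall>(R :: ('a, 'b) ring_scheme) (phi :: nat \<Rightarrow> 'a) (d::nat) (m::nat) (e::nat) (t::nat).
      field R \<and> finite (carrier R) \<and> card (carrier R) = m \<and>
      bij_betw phi {1..m} (carrier R) \<and> d \<le> m \<and> e \<le> m \<and>
      N \<le> d * m \<and> real t = real (d * m) powr (11/10)
      \<longrightarrow> measure_pmf.prob
            (Pi_pmf ({1..d} \<times> {1..m} \<times> {1..t}) False
               (\<lambda>_. bernoulli_pmf (real (d * m) powr (- 1/10))))
            {K. is_projection (NW R phi d m e) ({1..d} \<times> {1..m}) (NWLin_restr R phi d m e t K)}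
          \<ge> 1 - eps"
  proof (intro exI[of _ "nat \<lceil>4 / eps\<rceil> + 1"] allI impI, elim conjE)
    fix R :: "('a, 'b) ring_scheme" and phi :: "nat \<Rightarrow> 'a" and d m e t :: nat
    assume F: "field R" and bij: "bij_betw phi {1..m} (carrier R)" and dm: "d \<le> m"
      and N: "nat \<lceil>4 / eps\<rceil> + 1 \<le> d * m" and tdef: "real t = real (d * m) powr (11/10)"
    define n where "n = real (d * m)"
    define p where "p = n powr (- 1/10)"
    define A :: "(nat \<times> nat \<times> nat) set" where "A = {1..d} \<times> {1..m} \<times> {1..t}"
    define M where "M = Pi_pmf A False (\<lambda>_. bernoulli_pmf p)"
    define G where "G = {K. is_projection (NW R phi d m e) ({1..d} \<times> {1..m}) (NWLin_restr R phi d m e t K)}"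
    define E where "E = (\<lambda>ij::nat\<times>nat. Pi A (\<lambda>x. if fst x = fst ij \<and> fst (snd x) = snd ij then {False} else UNIV))"
    have n4: "n \<ge> 4 / eps" unfolding n_def using N by linarith
    have n1: "n \<ge> 1" unfolding n_def using N by linarith
    have p0: "0 \<le> p" unfolding p_def by simp
    have p1: "p \<le> 1" unfolding p_def using powr_mono[of "- 1/10" 0 n] n1 by simp
    have pt: "p * real t = n"
    proof -
      have "p * real t = n powr (- 1/10) * n powr (11/10)" by (simp add: p_def tdef n_def)
      also have "\<dots> = n powr (- 1/10 + 11/10)" by (rule powr_add[symmetric])
      also have "(- 1/10 + 11/10 :: real) = 1" by simp
      also have "n powr 1 = n" using n1 by simp
      finally show ?thesis .
    qed
    have sub: "UNIV - G \<subseteq> (\<Union>ij\<in>{1..d} \<times> {1..m}. E ij)"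
    proof
      fix K assume "K \<in> UNIV - G"
      then have "\<not> is_projection (NW R phi d m e) ({1..d} \<times> {1..m}) (NWLin_restr R phi d m e t K)"
        unfolding G_def by simp
      then have "\<not> (\<forall>i\<in>{1..d}. \<forall>j\<in>{1..m}. \<exists>h\<in>{1..t}. K (i, j, h))"
        using good_projection[OF F bij dm] by blast
      then obtain i j where ij: "i \<in> {1..d}" "j \<in> {1..m}" "\<forall>h\<in>{1..t}. \<not> K (i, j, h)" by blast
      have "K \<in> E (i, j)" unfolding E_def A_def using ij by auto
      then show "K \<in> (\<Union>ij\<in>{1..d} \<times> {1..m}. E ij)" using ij by blast
    qed
    have "measure_pmf.prob M (UNIV - G) \<le> measure_pmf.prob M (\<Union>ij\<in>{1..d} \<times> {1..m}. E ij)"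
      using sub by (intro measure_pmf.finite_measure_mono) auto
    also have "\<dots> \<le> (\<Sum>ij\<in>{1..d} \<times> {1..m}. measure_pmf.prob M (E ij))"
      by (intro measure_pmf.finite_measure_subadditive_finite) auto
    also have "\<dots> = (\<Sum>ij\<in>{1..d} \<times> {1..m}. (1 - p) ^ t)"
    proof (intro sum.cong refl)
      fix ij assume "ij \<in> {1..d} \<times> {1..m}"
      then obtain i j where "ij = (i, j)" "i \<in> {1..d}" "j \<in> {1..m}" by blast
      then show "measure_pmf.prob M (E ij) = (1 - p) ^ t"
        unfolding M_def E_def A_def using prob_E[OF p0 p1, of i d j m t] by simp
    qed
    also have "\<dots> = n * (1 - p) ^ t" unfolding n_def by simp
    also have "\<dots> \<le> n * exp (- p) ^ t"
      using n1 p1 by (intro mult_left_mono power_mono) (auto simp: exp_ge_add_one_self[of "-p", simplified])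
    also have "exp (- p) ^ t = exp (- n)"
      using pt by (simp flip: exp_of_nat_mult) (simp add: mult.commute)
    also have "n * exp (- n) \<le> eps" using real_tail[OF eps n4] n1 by simp
    finally have bad: "measure_pmf.prob M (UNIV - G) \<le> eps" .
    have "measure_pmf.prob M (UNIV - G) = 1 - measure_pmf.prob M G"
      using measure_pmf.prob_compl[of G M] by simp
    with bad have "measure_pmf.prob M G \<ge> 1 - eps" by simp
    then show "measure_pmf.prob (Pi_pmf ({1..d} \<times> {1..m} \<times> {1..t}) False
               (\<lambda>_. bernoulli_pmf (real (d * m) powr (- 1/10)))) {K. is_projection (NW R phi d m e) ({1..d} \<times> {1..m}) (NWLin_restr R phi d m e t K)}
          \<ge> 1 - eps"
      unfolding M_def G_def A_def p_def n_def .
  qed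
qed

end
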